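(* Let $\alpha_1,\dots,\alpha_5\le0$ be integers, let $r:=-(\alpha_1+\cdots+\alpha_5)$, let $a$ be an integer with $0\le a\le r$ and $b\in\mathbb Z$. Then $J_{11}^a\,q^b\,\tilde P_1^{\alpha_1}\tilde P_2^{\alpha_2}\tilde P_3^{\alpha_3}\tilde P_4^{\alpha_4}\tilde P_5^{\alpha_5}$ has all (Laurent) coefficients non-negative.
   Context: $(x;q)_\infty=\prod_{i\ge0}(1-xq^i)$; $J_{11}:=(q^{11};q^{11})_\infty$; $\tilde P_a:=(q^a;q^{11})_\infty(q^{11-a};q^{11})_\infty$ for $1\le a\le 5$. *)

theory Defs
  imports "HOL-Computational_Algebra.Formal_Laurent_Series"
begin

definition qpoch_inf :: "nat \<Rightarrow> nat \<Rightarrow> real fps" where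
  "qpoch_inf c m = lim (\<lambda>N. \<Prod>i<N. (1 - fps_X ^ (c + m * i)))"

definition J11 :: "real fps" where
  "J11 = qpoch_inf 11 11"

definition Ptilde :: "nat \<Rightarrow> real fps" where
  "Ptilde a = qpoch_inf a 11 * qpoch_inf (11 - a) 11"

end

theory Submission imports Defs begin
definition qp :: "'a::comm_ring_1 \<Rightarrow> 'a \<Rightarrow> nat \<Rightarrow> 'a" where
  "qp x Q n = (\<Prod>i<n. 1 - x * Q^i)"

fun gb :: "'a::comm_ring_1 \<Rightarrow> nat \<Rightarrow> nat \<Rightarrow> 'a" where
  "gb Q 0 n = (if n = 0 then 1 else 0)"
| "gb Q (Suc N) n = gb Q N n + (if n = 0 then 0 else Q^(Suc N - n) * gb Q N (n - 1))"

lemma gb_zero: "N < n \<Longrightarrow> gb Q N n = 0"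
  by (induction N arbitrary: n) auto

lemma qp_Suc: "qp x Q (Suc n) = qp x Q n * (1 - x*Q^n)"
  by (simp add: qp_def)

lemma gb_identity:
  "qp (x*y) Q N = (\<Sum>n\<le>N. gb Q N n * y^n * qp x Q n * qp y Q (N - n))"
proof (induction N)
  case 0 show ?case by (simp add: qp_def)
next
  case (Suc N)
  define t where "t m = gb Q N m * y^m * qp x Q m * qp y Q (N - m)" for m
  have S1: "(\<Sum>n\<le>Suc N. gb Q N n * y^n * qp x Q n * qp y Q (Suc N - n))
      = (\<Sum>m\<le>N. t m * (1 - y*Q^(N-m)))"
  proof -
    have "(\<Sum>n\<le>Suc N. gb Q N n * y^n * qp x Q n * qp y Q (Suc N - n))
       = (\<Sum>n\<le>N. gb Q N n * y^n * qp x Q n * qp y Q (Suc N - n))"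
      by (simp add: gb_zero)
    also have "\<dots> = (\<Sum>m\<le>N. t m * (1 - y*Q^(N-m)))"
    proof (rule sum.cong)
      fix m assume "m \<in> {..N}"
      then have "Suc N - m = Suc (N - m)" by auto
      then show "gb Q N m * y^m * qp x Q m * qp y Q (Suc N - m) = t m * (1 - y*Q^(N-m))"
        by (simp add: t_def qp_Suc mult.assoc)
    qed simp
    finally show ?thesis .
  qed
  have S2: "(\<Sum>n\<le>Suc N. (if n=0 then 0 else Q^(Suc N - n) * gb Q N (n-1)) * y^n * qp x Q n * qp y Q (Suc N - n))
      = (\<Sum>m\<le>N. t m * (Q^(N-m)*y*(1 - x*Q^m)))"
    unfolding sum.atMost_Suc_shift
    by (auto intro!: sum.cong simp: t_def qp_Suc Suc_diff_le algebra_simps)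
  have "(\<Sum>n\<le>Suc N. gb Q (Suc N) n * y^n * qp x Q n * qp y Q (Suc N - n))
     = (\<Sum>n\<le>Suc N. gb Q N n * y^n * qp x Q n * qp y Q (Suc N - n))
       + (\<Sum>n\<le>Suc N. (if n=0 then 0 else Q^(Suc N - n) * gb Q N (n-1)) * y^n * qp x Q n * qp y Q (Suc N - n))"
    by (simp add: sum.distrib[symmetric] algebra_simps del: gb.simps) (simp add: algebra_simps)
  also have "\<dots> = (\<Sum>m\<le>N. t m * (1 - y*Q^(N-m)) + t m * (Q^(N-m)*y*(1 - x*Q^m)))"
    unfolding S1 S2 sum.distrib ..
  also have "\<dots> = (\<Sum>m\<le>N. t m * (1 - x*y*Q^N))"
  proof (rule sum.cong)
    fix m assume "m \<in> {..N}"
    then have "Q^(N-m) * Q^m = Q^N" by (simp add: power_add[symmetric])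
    then show "t m * (1 - y*Q^(N-m)) + t m * (Q^(N-m)*y*(1 - x*Q^m)) = t m * (1 - x*y*Q^N)"
      by (simp add: algebra_simps)
  qed simp
  also have "\<dots> = qp (x*y) Q (Suc N)"
    by (simp add: Suc.IH t_def qp_Suc sum_distrib_right)
  finally show ?case ..
qed

definition nn :: "real fps \<Rightarrow> bool" where "nn f \<longleftrightarrow> (\<forall>k. 0 \<le> f $ k)"

lemma nn_mult: "nn f \<Longrightarrow> nn g \<Longrightarrow> nn (f * g)"
  unfolding nn_def fps_mult_nth by (auto intro!: sum_nonneg)

lemma nn_add: "nn f \<Longrightarrow> nn g \<Longrightarrow> nn (f + g)"
  unfolding nn_def by (auto intro: add_nonneg_nonneg)

lemma nn_one: "nn 1"
  unfolding nn_def by (auto simp: fps_one_nth)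

lemma nn_X_power: "nn (fps_X ^ k)"
  unfolding nn_def by (auto simp: fps_X_power_nth)

lemma nn_power: "nn f \<Longrightarrow> nn (f ^ n)"
  by (induction n) (auto intro: nn_mult nn_one)

lemma nn_sum: "(\<And>i. i \<in> A \<Longrightarrow> nn (f i)) \<Longrightarrow> nn (sum f A)"
  by (induction A rule: infinite_finite_induct) (auto intro: nn_add simp: nn_def)

lemma nn_prod: "(\<And>i. i \<in> A \<Longrightarrow> nn (f i)) \<Longrightarrow> nn (prod f A)"
  by (induction A rule: infinite_finite_induct) (auto intro: nn_mult nn_one)

lemma nn_gb: "nn (gb (fps_X ^ c) N n)"
  by (induction N arbitrary: n) (auto intro!: nn_add nn_mult nn_one nn_X_power simp: nn_def[of 0] simp flip: power_mult)

lemma inv_geo: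
  assumes "0 < c"
  shows "inverse (1 - fps_X ^ c :: real fps) = Abs_fps (\<lambda>n. if c dvd n then 1 else 0)"
proof -
  let ?A = "Abs_fps (\<lambda>n. if c dvd n then 1 else 0) :: real fps"
  have "(1 - fps_X ^ c) * ?A = 1"
  proof (rule fps_ext)
    fix n
    have "((1 - fps_X ^ c) * ?A) $ n = ?A $ n - (fps_X ^ c * ?A) $ n"
      by (simp add: algebra_simps)
    also have "\<dots> = (1::real fps) $ n"
      using assms by (auto simp: fps_X_power_mult_nth dvd_minus_self
          dest: dvd_imp_le)
    finally show "((1 - fps_X ^ c) * ?A) $ n = (1::real fps) $ n" .
  qed
  moreover have "(1 - fps_X ^ c :: real fps) $ 0 \<noteq> 0" using assms by simp
  ultimately show ?thesis
    by (metis fps_inverse_unique)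
qed

lemma nn_inv_geo: "0 < c \<Longrightarrow> nn (inverse (1 - fps_X ^ c :: real fps))"
  by (simp add: inv_geo nn_def)

lemma const_prod_geo:
  "(\<And>i. i \<in> A \<Longrightarrow> 0 < c i) \<Longrightarrow> (\<Prod>i\<in>A. 1 - fps_X ^ c i :: real fps) $ 0 = 1"
  by (induction A rule: infinite_finite_induct) auto

lemma nn_inv_prod_geo:
  "(\<And>i. i \<in> A \<Longrightarrow> 0 < c i) \<Longrightarrow> nn (inverse (\<Prod>i\<in>A. 1 - fps_X ^ c i :: real fps))"
  by (induction A rule: infinite_finite_induct) (auto simp: fps_inverse_mult intro!: nn_mult nn_inv_geo nn_one)

lemma qp_X: "qp (fps_X ^ c) (fps_X ^ 11) n = (\<Prod>i<n. 1 - fps_X ^ (c + 11 * i) :: real fps)"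
  by (simp add: qp_def power_add power_mult)

lemma nn_qp_ratio:
  assumes "0 < c" "n \<le> N"
  shows "nn (qp (fps_X ^ c) (fps_X ^ 11) n * inverse (qp (fps_X ^ c) (fps_X ^ 11) N))"
proof -
  let ?f = "\<lambda>i. 1 - fps_X ^ (c + 11 * i) :: real fps"
  have split: "prod ?f {..<N} = prod ?f {..<n} * prod ?f {n..<N}"
    using prod.atLeastLessThan_concat[of 0 n N ?f] assms by (simp add: atLeast0LessThan)
  have c0: "prod ?f {..<n} $ 0 \<noteq> 0"
    using const_prod_geo[of "{..<n}" "\<lambda>i. c + 11 * i"] assms by simp
  have "qp (fps_X ^ c) (fps_X ^ 11) n * inverse (qp (fps_X ^ c) (fps_X ^ 11) N)
      = inverse (prod ?f {n..<N})"
    unfolding qp_X split fps_inverse_mult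
    using inverse_mult_eq_1[OF c0] by (simp add: algebra_simps)
  moreover have "nn (inverse (prod ?f {n..<N}))"
    by (rule nn_inv_prod_geo) (use assms in auto)
  ultimately show ?thesis by simp
qed

definition Pf :: "nat \<Rightarrow> nat \<Rightarrow> real fps" where
  "Pf c N = (\<Prod>i<N. 1 - fps_X ^ (c + 11 * i))"

lemma nn_finite_main:
  assumes "0 < a" "a < 11"
  shows "nn (Pf 11 N * inverse (Pf a N * Pf (11 - a) N))"
proof -
  let ?x = "fps_X ^ a :: real fps" and ?y = "fps_X ^ (11 - a) :: real fps" and ?Q = "fps_X ^ 11 :: real fps"
  have xy: "?x * ?y = fps_X ^ 11" using assms by (simp flip: power_add)
  have P11: "Pf 11 N = qp (?x * ?y) ?Q N"
    unfolding xy qp_X Pf_def by simp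
  have eq: "Pf 11 N * inverse (Pf a N * Pf (11 - a) N)
     = (\<Sum>n\<le>N. gb ?Q N n * ?y ^ n * (qp ?x ?Q n * inverse (qp ?x ?Q N))
          * (qp ?y ?Q (N - n) * inverse (qp ?y ?Q N)))"
    unfolding P11 gb_identity sum_distrib_right
    by (intro sum.cong) (auto simp: Pf_def qp_X fps_inverse_mult algebra_simps)
  show ?thesis
    unfolding eq
    by (intro nn_sum nn_mult nn_gb nn_power nn_X_power nn_qp_ratio) (use assms in auto)
qed

lemma nn_finite_inv:
  assumes "0 < a" "a < 11"
  shows "nn (inverse (Pf a N * Pf (11 - a) N))"
  unfolding Pf_def fps_inverse_mult
  by (intro nn_mult nn_inv_prod_geo) (use assms in auto)


lemma Pf_Suc: "Pf c (Suc N) = Pf c N * (1 - fps_X ^ (c + 11 * N))"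
  by (simp add: Pf_def)

lemma Pf_stable:
  assumes "k < N"
  shows "Pf c N $ k = Pf c (Suc k) $ k"
proof -
  have "Suc k \<le> N" using assms by simp
  then show ?thesis
  proof (induction N rule: dec_induct)
    case base then show ?case by simp
  next
    case (step M)
    have "Pf c (Suc M) $ k = Pf c M $ k - (Pf c M * fps_X ^ (c + 11 * M)) $ k"
      by (simp add: Pf_Suc algebra_simps)
    also have "(Pf c M * fps_X ^ (c + 11 * M)) $ k = 0"
      using step by (simp add: fps_X_power_mult_right_nth)
    finally show ?case using step by simp
  qed
qed

lemma qpoch_nth:
  assumes "k < N"
  shows "qpoch_inf c 11 $ k = Pf c N $ k"
proof -
  have "(\<lambda>N. Pf c N) \<longlonglongrightarrow> Abs_fps (\<lambda>k. Pf c (Suc k) $ k)"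
  proof (rule tendsto_fpsI)
    fix n
    show "\<forall>\<^sub>F x in sequentially. Pf c x $ n = Abs_fps (\<lambda>k. Pf c (Suc k) $ k) $ n"
      unfolding eventually_at_top_linorder
      by (rule exI[of _ "Suc n"]) (auto intro: Pf_stable)
  qed
  then have "qpoch_inf c 11 = Abs_fps (\<lambda>k. Pf c (Suc k) $ k)"
    unfolding qpoch_inf_def Pf_def by (rule limI)
  then show ?thesis using Pf_stable[OF assms] by simp
qed

definition eqn :: "nat \<Rightarrow> real fps \<Rightarrow> real fps \<Rightarrow> bool" where
  "eqn n f g \<longleftrightarrow> (\<forall>k\<le>n. f $ k = g $ k)"

lemma eqn_mult: "eqn n f1 f2 \<Longrightarrow> eqn n g1 g2 \<Longrightarrow> eqn n (f1 * g1) (f2 * g2)"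
  unfolding eqn_def fps_mult_nth by (auto intro!: sum.cong)

lemma eqn_inverse:
  assumes e: "eqn n f g" and f0: "f $ 0 \<noteq> 0"
  shows "eqn n (inverse f) (inverse g)"
proof -
  have g0: "g $ 0 \<noteq> 0" using e f0 by (auto simp: eqn_def)
  have d: "inverse f - inverse g = (g - f) * (inverse f * inverse g)"
  proof -
    have "(g - f) * (inverse f * inverse g) = (inverse g * g) * inverse f - (inverse f * f) * inverse g"
      by (simp add: algebra_simps)
    also have "\<dots> = inverse f - inverse g"
      using inverse_mult_eq_1[OF f0] inverse_mult_eq_1[OF g0] by simp
    finally show ?thesis ..
  qed
  show ?thesis unfolding eqn_def
  proof (intro allI impI)
    fix k assume k: "k \<le> n"
    have "(inverse f - inverse g) $ k = 0"
      unfolding d fps_mult_nth using e k by (auto simp: eqn_def intro!: sum.neutral)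
    then show "inverse f $ k = inverse g $ k" by simp
  qed
qed

lemma eqn_nn: "eqn n f g \<Longrightarrow> nn g \<Longrightarrow> 0 \<le> f $ n"
  by (auto simp: eqn_def nn_def)

lemma J_eqn: "eqn k J11 (Pf 11 (Suc k))"
  unfolding eqn_def J11_def using qpoch_nth by auto

lemma P_eqn: "0 < a \<Longrightarrow> a < 11 \<Longrightarrow> eqn k (Ptilde a) (Pf a (Suc k) * Pf (11 - a) (Suc k))"
proof -
  have "eqn k (qpoch_inf a 11) (Pf a (Suc k))" "eqn k (qpoch_inf (11 - a) 11) (Pf (11 - a) (Suc k))"
    unfolding eqn_def using qpoch_nth by auto
  then show ?thesis unfolding Ptilde_def by (rule eqn_mult)
qed

lemma P0: "0 < a \<Longrightarrow> a < 11 \<Longrightarrow> Ptilde a $ 0 \<noteq> 0"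
proof -
  assume a: "0 < a" "a < 11"
  have "Ptilde a $ 0 = (Pf a 1 * Pf (11 - a) 1) $ 0"
    using P_eqn[OF a, of 0] by (simp add: eqn_def)
  also have "\<dots> = 1" using a by (simp add: Pf_def)
  finally show ?thesis by simp
qed

lemma nn_U: "0 < a \<Longrightarrow> a < 11 \<Longrightarrow> nn (J11 * inverse (Ptilde a))"
  unfolding nn_def
proof
  fix k assume a: "0 < a" "a < 11"
  have "eqn k (J11 * inverse (Ptilde a)) (Pf 11 (Suc k) * inverse (Pf a (Suc k) * Pf (11 - a) (Suc k)))"
    by (intro eqn_mult J_eqn eqn_inverse P_eqn P0 a)
  then show "0 \<le> (J11 * inverse (Ptilde a)) $ k"
    by (rule eqn_nn) (rule nn_finite_main[OF a])
qed

lemma nn_V: "0 < a \<Longrightarrow> a < 11 \<Longrightarrow> nn (inverse (Ptilde a))"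
  unfolding nn_def
proof
  fix k assume a: "0 < a" "a < 11"
  have "eqn k (inverse (Ptilde a)) (inverse (Pf a (Suc k) * Pf (11 - a) (Suc k)))"
    by (intro eqn_inverse P_eqn P0 a)
  then show "0 \<le> inverse (Ptilde a) $ k"
    by (rule eqn_nn) (rule nn_finite_inv[OF a])
qed

lemma absorb:
  assumes U: "nn (J * V)" and V: "nn V" and W: "\<forall>A'\<le>A. nn (J ^ A' * W)"
  shows "\<forall>A'\<le>A + K. nn (J ^ A' * (W * V ^ K))"
proof (intro allI impI)
  fix A' assume A': "A' \<le> A + K"
  show "nn (J ^ A' * (W * V ^ K))"
  proof (cases "A' \<le> K")
    case True
    have W0: "nn W" using W by (metis le0 mult_1 power_0)
    have eq: "J ^ A' * (W * V ^ K) = (J * V) ^ A' * W * V ^ (K - A')"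
    proof -
      have "V ^ K = V ^ A' * V ^ (K - A')" using True by (simp flip: power_add)
      then show ?thesis by (simp add: power_mult_distrib algebra_simps)
    qed
    show ?thesis unfolding eq by (intro nn_mult nn_power U V W0)
  next
    case False
    have eq: "J ^ A' * (W * V ^ K) = (J * V) ^ K * (J ^ (A' - K) * W)"
    proof -
      have "J ^ A' = J ^ K * J ^ (A' - K)" using False by (simp flip: power_add)
      then show ?thesis by (simp add: power_mult_distrib algebra_simps)
    qed
    have "A' - K \<le> A" using A' by simp
    then show ?thesis unfolding eq using W by (intro nn_mult[OF nn_power[OF U]]) auto
  qed
qed

lemma powi_nonpos:
  assumes "\<alpha> \<le> 0" "P $ 0 \<noteq> 0"
  shows "fps_to_fls P powi \<alpha> = fps_to_fls (inverse P ^ nat (- \<alpha>))"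
proof -
  have "subdegree P = 0" using assms by (simp add: subdegree_eq_0_iff)
  then show ?thesis using assms
    by (cases "\<alpha> = 0") (auto simp: power_int_def fps_to_fls_power fls_inverse_fps_to_fls)
qed

theorem lemma6p2:
  fixes \<alpha>1 \<alpha>2 \<alpha>3 \<alpha>4 \<alpha>5 a b :: int
  assumes "\<alpha>1 \<le> 0" "\<alpha>2 \<le> 0" "\<alpha>3 \<le> 0" "\<alpha>4 \<le> 0" "\<alpha>5 \<le> 0"
    and "0 \<le> a" and "a \<le> - (\<alpha>1 + \<alpha>2 + \<alpha>3 + \<alpha>4 + \<alpha>5)"
  shows "\<forall>n::int. 0 \<le> fls_nth
     (fps_to_fls J11 powi a * fls_X_intpow b
      * fps_to_fls (Ptilde 1) powi \<alpha>1 * fps_to_fls (Ptilde 2) powi \<alpha>2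
      * fps_to_fls (Ptilde 3) powi \<alpha>3 * fps_to_fls (Ptilde 4) powi \<alpha>4
      * fps_to_fls (Ptilde 5) powi \<alpha>5) n"
proof
  fix n :: int
  define G where "G = J11 ^ nat a * (1 * inverse (Ptilde 1) ^ nat (-\<alpha>1) * inverse (Ptilde 2) ^ nat (-\<alpha>2)
     * inverse (Ptilde 3) ^ nat (-\<alpha>3) * inverse (Ptilde 4) ^ nat (-\<alpha>4) * inverse (Ptilde 5) ^ nat (-\<alpha>5))"
  have base: "\<forall>A'\<le>0. nn (J11 ^ A' * 1)" by (simp add: nn_one)
  have "\<forall>A'\<le>0 + nat (-\<alpha>1) + nat (-\<alpha>2) + nat (-\<alpha>3) + nat (-\<alpha>4) + nat (-\<alpha>5).
     nn (J11 ^ A' * (1 * inverse (Ptilde 1) ^ nat (-\<alpha>1) * inverse (Ptilde 2) ^ nat (-\<alpha>2)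
     * inverse (Ptilde 3) ^ nat (-\<alpha>3) * inverse (Ptilde 4) ^ nat (-\<alpha>4) * inverse (Ptilde 5) ^ nat (-\<alpha>5)))"
    apply (rule absorb, rule nn_U, simp, simp, rule nn_V, simp, simp)+
    apply (rule base)
    done
  moreover have "nat a \<le> 0 + nat (-\<alpha>1) + nat (-\<alpha>2) + nat (-\<alpha>3) + nat (-\<alpha>4) + nat (-\<alpha>5)"
    using assms by linarith
  ultimately have nnG: "nn G" unfolding G_def by blast
  have conv: "fps_to_fls J11 powi a * fls_X_intpow b
      * fps_to_fls (Ptilde 1) powi \<alpha>1 * fps_to_fls (Ptilde 2) powi \<alpha>2
      * fps_to_fls (Ptilde 3) powi \<alpha>3 * fps_to_fls (Ptilde 4) powi \<alpha>4
      * fps_to_fls (Ptilde 5) powi \<alpha>5 = fls_X_intpow b * fps_to_fls G"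
  proof -
    have h0: "fps_to_fls J11 powi a = fps_to_fls (J11 ^ nat a)"
      using assms by (simp add: power_int_def fps_to_fls_power)
    have h1: "fps_to_fls (Ptilde 1) powi \<alpha>1 = fps_to_fls (inverse (Ptilde 1) ^ nat (-\<alpha>1))"
      using assms by (intro powi_nonpos P0) auto
    have h2: "fps_to_fls (Ptilde 2) powi \<alpha>2 = fps_to_fls (inverse (Ptilde 2) ^ nat (-\<alpha>2))"
      using assms by (intro powi_nonpos P0) auto
    have h3: "fps_to_fls (Ptilde 3) powi \<alpha>3 = fps_to_fls (inverse (Ptilde 3) ^ nat (-\<alpha>3))"
      using assms by (intro powi_nonpos P0) auto
    have h4: "fps_to_fls (Ptilde 4) powi \<alpha>4 = fps_to_fls (inverse (Ptilde 4) ^ nat (-\<alpha>4))"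
      using assms by (intro powi_nonpos P0) auto
    have h5: "fps_to_fls (Ptilde 5) powi \<alpha>5 = fps_to_fls (inverse (Ptilde 5) ^ nat (-\<alpha>5))"
      using assms by (intro powi_nonpos P0) auto
    show ?thesis unfolding h0 h1 h2 h3 h4 h5 G_def fls_times_fps_to_fls
      by (simp only: mult_ac fps_one_to_fls mult_1_left mult_1_right)
  qed
  show "0 \<le> fls_nth (fps_to_fls J11 powi a * fls_X_intpow b
      * fps_to_fls (Ptilde 1) powi \<alpha>1 * fps_to_fls (Ptilde 2) powi \<alpha>2
      * fps_to_fls (Ptilde 3) powi \<alpha>3 * fps_to_fls (Ptilde 4) powi \<alpha>4
      * fps_to_fls (Ptilde 5) powi \<alpha>5) n"
    unfolding conv unfolding fls_X_intpow_times_conv_shift fls_shift_nth fps_to_fls_nth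
    using nnG by (simp add: nn_def)
qed

end
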